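(* Let $n\ge 2$, $d\ge 1$, $\tau>0$, $\sigma>0$. Let $\mu^\star_1,\mu^\star_2\stackrel{\mathrm{i.i.d.}}{\sim}\mathcal N(0,\tau^2 I_d)$ and $\xi_1,\dots,\xi_n\stackrel{\mathrm{i.i.d.}}{\sim}\mathcal N(0,\sigma^2 I_d)$, independent, let $z^\star_1,\dots,z^\star_n\in\{1,2\}$ be fixed labels with both classes nonempty, and $x_i=\mu^\star_{z^\star_i}+\xi_i$. Let $\{C_1,C_2\}$ be a fixed partition of $[n]$ into two nonempty sets with centroids $\widehat\mu_j=|C_j|^{-1}\sum_{k\in C_j}x_k$. Fix $i\in[n]$, let $j$ be such that $i\in C_j$, $\overline j$ the other index, and $c=|C_j|$, $\bar c=|C_{\overline j}|$. If $$\sigma>\frac{\sqrt{2\bar c}\,\tau\,(c-1)}{\sqrt{c(c+\bar c)}},$$ then $$\mathbb P\bigl(\|x_i-\widehat\mu_{\overline j}\|^2<\|x_i-\widehat\mu_j\|^2\bigr)\le\rho^{d/4},$$ where $$\rho=\frac{4\sigma^2(c-1)c^2\bar c(\bar c+1)\bigl(c(\sigma^2+2\tau^2)-2\tau^2\bigr)}{\bigl(-c(\sigma^2+4\tau^2)\bar c+c^2(\sigma^2+2(\sigma^2+\tau^2)\bar c)+2\tau^2\bar c\bigr)^2},$$ and $0\le\rho<1$.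
   Context: $[n]=\{1,\dots,n\}$. Randomness is only over the centers $\mu^\star_\ell$ and the noise $\xi_i$; the labels $z^\star$ and the partition $\{C_1,C_2\}$ are deterministic. *)

theory Defs
  imports "HOL-Probability.Probability"
begin

text \<open>Sample space: coordinates indexed by (r, k) with r in {1..n+2}, k < d.
  Rows r = 1..n are the noise vectors xi_r ~ N(0, sigma^2 I_d);
  rows n+1 and n+2 are the centers mu_1, mu_2 ~ N(0, tau^2 I_d).\<close>
definition gmm_space :: "nat \<Rightarrow> nat \<Rightarrow> real \<Rightarrow> real \<Rightarrow> (nat \<times> nat \<Rightarrow> real) measure" where
  "gmm_space n d \<tau> \<sigma> =
     PiM ({1..n+2} \<times> {..<d})
       (\<lambda>(r, k). density lborel (normal_density 0 (if r \<le> n then \<sigma> else \<tau>)))"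

definition center :: "nat \<Rightarrow> nat \<Rightarrow> (nat \<times> nat \<Rightarrow> real) \<Rightarrow> nat \<Rightarrow> real" where
  "center n l \<omega> k = \<omega> (n + l, k)"

definition datapt :: "nat \<Rightarrow> (nat \<Rightarrow> nat) \<Rightarrow> nat \<Rightarrow> (nat \<times> nat \<Rightarrow> real) \<Rightarrow> nat \<Rightarrow> real" where
  "datapt n z i \<omega> k = center n (z i) \<omega> k + \<omega> (i, k)"

definition centroid :: "nat \<Rightarrow> (nat \<Rightarrow> nat) \<Rightarrow> nat set \<Rightarrow> (nat \<times> nat \<Rightarrow> real) \<Rightarrow> nat \<Rightarrow> real" where
  "centroid n z C \<omega> k = (\<Sum>m\<in>C. datapt n z m \<omega> k) / real (card C)"

definition sqdist :: "nat \<Rightarrow> (nat \<Rightarrow> real) \<Rightarrow> (nat \<Rightarrow> real) \<Rightarrow> real" where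
  "sqdist d u v = (\<Sum>k<d. (u k - v k)\<^sup>2)"

definition rho_bound :: "real \<Rightarrow> real \<Rightarrow> real \<Rightarrow> real \<Rightarrow> real" where
  "rho_bound \<sigma> \<tau> c cb =
     4 * \<sigma>\<^sup>2 * (c - 1) * c\<^sup>2 * cb * (cb + 1) * (c * (\<sigma>\<^sup>2 + 2 * \<tau>\<^sup>2) - 2 * \<tau>\<^sup>2)
     / (- c * (\<sigma>\<^sup>2 + 4 * \<tau>\<^sup>2) * cb + c\<^sup>2 * (\<sigma>\<^sup>2 + 2 * (\<sigma>\<^sup>2 + \<tau>\<^sup>2) * cb) + 2 * \<tau>\<^sup>2 * cb)\<^sup>2"

end

theory Submission
  imports Defs
begin

lemma nn_integral_normal_density_1:
  assumes "\<sigma> > 0"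
  shows "(\<integral>\<^sup>+ y. ennreal (normal_density m \<sigma> y) \<partial>lborel) = 1"
proof -
  interpret prob_space "density lborel (normal_density m \<sigma>)"
    using prob_space_normal_density[OF assms] .
  have "emeasure (density lborel (normal_density m \<sigma>)) UNIV = 1"
    using emeasure_space_1 by simp
  then show ?thesis by (simp add: emeasure_density)
qed

lemma alg_e:
  fixes \<sigma> s c S y Dn :: real
  assumes sp: "\<sigma> > 0" and Dp: "Dn > 0" and Dn_def: "Dn = 1 + 2 * s * c\<^sup>2 * \<sigma>\<^sup>2"
  shows "-(y - 0)\<^sup>2 / (2 * \<sigma>\<^sup>2) + (- s * (c * y + S)\<^sup>2) = -(y - (- 2 * s * c * S * (\<sigma>\<^sup>2 / Dn)))\<^sup>2 / (2 * (\<sigma>\<^sup>2 / Dn)) + (- s * S\<^sup>2 / Dn)"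
proof -
  have A: "-(y - (- 2 * s * c * S * (\<sigma>\<^sup>2 / Dn)))\<^sup>2 / (2 * (\<sigma>\<^sup>2 / Dn)) + (- s * S\<^sup>2 / Dn) = (-(y * Dn + 2 * s * c * S * \<sigma>\<^sup>2)\<^sup>2 - 2 * \<sigma>\<^sup>2 * s * S\<^sup>2) / (2 * \<sigma>\<^sup>2 * Dn)"
    using sp Dp by (simp add: field_simps power2_eq_square)
  have P: "(-(y - 0)\<^sup>2 / (2 * \<sigma>\<^sup>2) + (- s * (c * y + S)\<^sup>2)) * (2 * \<sigma>\<^sup>2 * Dn) = -y\<^sup>2 * Dn - 2 * \<sigma>\<^sup>2 * Dn * s * (c * y + S)\<^sup>2"
    using sp Dp by (simp add: field_simps power2_eq_square)
  have Q: "-y\<^sup>2 * Dn - 2 * \<sigma>\<^sup>2 * Dn * s * (c * y + S)\<^sup>2 = (-(y * Dn + 2 * s * c * S * \<sigma>\<^sup>2)\<^sup>2 - 2 * \<sigma>\<^sup>2 * s * S\<^sup>2)"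
    unfolding Dn_def by (simp add: power2_eq_square algebra_simps)
  have "-(y - 0)\<^sup>2 / (2 * \<sigma>\<^sup>2) + (- s * (c * y + S)\<^sup>2) = (-(y * Dn + 2 * s * c * S * \<sigma>\<^sup>2)\<^sup>2 - 2 * \<sigma>\<^sup>2 * s * S\<^sup>2) / (2 * \<sigma>\<^sup>2 * Dn)"
    using P Q sp Dp by (simp add: eq_divide_eq)
  then show ?thesis using A by simp
qed

lemma gauss_1d:
  fixes \<sigma> s c S :: real
  assumes sp: "\<sigma> > 0" and D: "1 + 2 * s * c\<^sup>2 * \<sigma>\<^sup>2 > 0"
  shows "(\<integral>\<^sup>+ y. ennreal (exp (- s * (c * y + S)\<^sup>2)) \<partial>density lborel (normal_density 0 \<sigma>))
       = ennreal (exp (- s * S\<^sup>2 / (1 + 2 * s * c\<^sup>2 * \<sigma>\<^sup>2)) / sqrt (1 + 2 * s * c\<^sup>2 * \<sigma>\<^sup>2))"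
proof -
  define Dn where "Dn = 1 + 2 * s * c\<^sup>2 * \<sigma>\<^sup>2"
  have Dp: "Dn > 0" using D Dn_def by simp
  define sg where "sg = \<sigma> / sqrt Dn"
  have sgp: "sg > 0" using sp Dp sg_def by simp
  have sg2: "sg\<^sup>2 = \<sigma>\<^sup>2 / Dn" using Dp by (simp add: sg_def power_divide)
  define m where "m = - 2 * s * c * S * sg\<^sup>2"
  define K where "K = exp (- s * S\<^sup>2 / Dn) / sqrt Dn"
  have Kp: "K \<ge> 0" using Dp K_def by simp
  have pt: "normal_density 0 \<sigma> y * exp (- s * (c * y + S)\<^sup>2) = K * normal_density m sg y" for y
  proof -
    have e: "-(y - 0)\<^sup>2 / (2 * \<sigma>\<^sup>2) + (- s * (c * y + S)\<^sup>2) = -(y - m)\<^sup>2 / (2 * sg\<^sup>2) + (- s * S\<^sup>2 / Dn)"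
      unfolding m_def sg2 by (rule alg_e[OF sp Dp Dn_def])
    have r: "1 / sqrt (2 * pi * \<sigma>\<^sup>2) = (1 / sqrt Dn) * (1 / sqrt (2 * pi * sg\<^sup>2))"
      using sp Dp unfolding sg2 by (simp add: real_sqrt_mult real_sqrt_divide field_simps)
    have "normal_density 0 \<sigma> y * exp (- s * (c * y + S)\<^sup>2) = 1 / sqrt (2 * pi * \<sigma>\<^sup>2) * exp (-(y - 0)\<^sup>2 / (2 * \<sigma>\<^sup>2) + (- s * (c * y + S)\<^sup>2))"
      unfolding normal_density_def exp_add by simp
    also have "\<dots> = (1 / sqrt Dn) * (1 / sqrt (2 * pi * sg\<^sup>2)) * (exp (-(y - m)\<^sup>2 / (2 * sg\<^sup>2)) * exp (- s * S\<^sup>2 / Dn))"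
      unfolding e r exp_add by simp
    also have "\<dots> = K * normal_density m sg y"
      unfolding normal_density_def K_def by (simp add: field_simps)
    finally show ?thesis .
  qed
  have "(\<integral>\<^sup>+ y. ennreal (exp (- s * (c * y + S)\<^sup>2)) \<partial>density lborel (normal_density 0 \<sigma>))
      = (\<integral>\<^sup>+ y. ennreal (normal_density 0 \<sigma> y) * ennreal (exp (- s * (c * y + S)\<^sup>2)) \<partial>lborel)"
    by (subst nn_integral_density) auto
  also have "\<dots> = (\<integral>\<^sup>+ y. ennreal K * ennreal (normal_density m sg y) \<partial>lborel)"
    using Kp by (intro nn_integral_cong) (simp only: ennreal_mult[symmetric] normal_density_nonneg exp_ge_zero pt[symmetric])
  also have "\<dots> = ennreal K"
    by (subst nn_integral_cmult) (auto simp: nn_integral_normal_density_1[OF sgp])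
  finally show ?thesis unfolding K_def Dn_def .
qed


lemma alg_e3:
  fixes s D1 VI ca R :: real
  assumes D1p: "D1 > 0" and D1_def: "D1 = 1 + 2 * s * ca" and pos: "1 + 2 * s * (ca + VI) > 0"
  shows "1 / sqrt D1 * (exp (- (s / D1) * R\<^sup>2 / (1 + 2 * (s / D1) * VI)) / sqrt (1 + 2 * (s / D1) * VI))
       = exp (- s * R\<^sup>2 / (1 + 2 * s * (ca + VI))) / sqrt (1 + 2 * s * (ca + VI))"
proof -
  have e1: "1 + 2 * (s / D1) * VI = (1 + 2 * s * (ca + VI)) / D1"
    using D1p unfolding D1_def by (simp add: divide_simps) (simp add: algebra_simps)
  have e2: "- (s / D1) * R\<^sup>2 / (1 + 2 * (s / D1) * VI) = - s * R\<^sup>2 / (1 + 2 * s * (ca + VI))"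
    unfolding e1 using D1p pos by (simp add: divide_simps)
  have e4: "sqrt D1 * sqrt (1 + 2 * (s / D1) * VI) = sqrt (1 + 2 * s * (ca + VI))"
    unfolding e1 using D1p by (simp add: real_sqrt_mult[symmetric])
  have "1 / sqrt D1 * (exp (- (s / D1) * R\<^sup>2 / (1 + 2 * (s / D1) * VI)) / sqrt (1 + 2 * (s / D1) * VI))
          = exp (- (s / D1) * R\<^sup>2 / (1 + 2 * (s / D1) * VI)) / (sqrt D1 * sqrt (1 + 2 * (s / D1) * VI))"
    by simp
  then show ?thesis unfolding e2 e4 .
qed

lemma gauss_PiM:
  fixes sf c :: "'i \<Rightarrow> real"
  assumes fin: "finite I" and sfp: "\<And>p. sf p > 0"
  shows "1 + 2 * s * (\<Sum>p\<in>I. (c p)\<^sup>2 * (sf p)\<^sup>2) > 0 \<Longrightarrow>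
    (\<integral>\<^sup>+\<omega>. ennreal (exp (- s * ((\<Sum>p\<in>I. c p * \<omega> p) + R)\<^sup>2))
       \<partial>PiM I (\<lambda>p. density lborel (normal_density 0 (sf p))))
    = ennreal (exp (- s * R\<^sup>2 / (1 + 2 * s * (\<Sum>p\<in>I. (c p)\<^sup>2 * (sf p)\<^sup>2)))
               / sqrt (1 + 2 * s * (\<Sum>p\<in>I. (c p)\<^sup>2 * (sf p)\<^sup>2)))"
  using fin
proof (induction I arbitrary: s R rule: finite_induct)
  case empty
  show ?case
    by (simp add: PiM_empty nn_integral_count_space_finite)
next
  case (insert a I)
  interpret product_sigma_finite "\<lambda>p. density lborel (normal_density 0 (sf p))"
    by (rule product_sigma_finite.intro) (rule prob_space_imp_sigma_finite[OF prob_space_normal_density[OF sfp]])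
  define VI where "VI = (\<Sum>p\<in>I. (c p)\<^sup>2 * (sf p)\<^sup>2)"
  define D1 where "D1 = 1 + 2 * s * (c a)\<^sup>2 * (sf a)\<^sup>2"
  have V: "(\<Sum>p\<in>insert a I. (c p)\<^sup>2 * (sf p)\<^sup>2) = (c a)\<^sup>2 * (sf a)\<^sup>2 + VI"
    using insert.hyps by (simp add: VI_def)
  have VI0: "VI \<ge> 0" unfolding VI_def by (intro sum_nonneg) simp
  have pos: "1 + 2 * s * ((c a)\<^sup>2 * (sf a)\<^sup>2 + VI) > 0" using insert.prems V by simp
  have D1p: "D1 > 0"
  proof (cases "s \<ge> 0")
    case True then show ?thesis unfolding D1_def by (simp add: add_pos_nonneg)
  next
    case False
    then have "s * VI \<le> 0" using VI0 by (simp add: mult_nonpos_nonneg)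
    then show ?thesis using pos unfolding D1_def by (simp add: algebra_simps)
  qed
  have pos2: "1 + 2 * (s / D1) * VI > 0"
  proof -
    have "1 + 2 * (s / D1) * VI = (1 + 2 * s * ((c a)\<^sup>2 * (sf a)\<^sup>2 + VI)) / D1"
      using D1p unfolding D1_def by (simp add: field_simps)
    then show ?thesis using pos D1p by simp
  qed
  have inner: "(\<integral>\<^sup>+ y. ennreal (exp (- s * ((\<Sum>p\<in>insert a I. c p * (x(a := y)) p) + R)\<^sup>2))
        \<partial>density lborel (normal_density 0 (sf a)))
     = ennreal (1 / sqrt D1) * ennreal (exp (- (s / D1) * ((\<Sum>p\<in>I. c p * x p) + R)\<^sup>2))" for x
  proof -
    have eqy: "(\<Sum>p\<in>insert a I. c p * (x(a := y)) p) + R = c a * y + ((\<Sum>p\<in>I. c p * x p) + R)" for y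
    proof -
      have "(\<Sum>p\<in>I. c p * (x(a := y)) p) = (\<Sum>p\<in>I. c p * x p)"
        using insert.hyps by (intro sum.cong) auto
      then show ?thesis using insert.hyps by simp
    qed
    then have "(\<integral>\<^sup>+ y. ennreal (exp (- s * ((\<Sum>p\<in>insert a I. c p * (x(a := y)) p) + R)\<^sup>2))
        \<partial>density lborel (normal_density 0 (sf a)))
      = (\<integral>\<^sup>+ y. ennreal (exp (- s * (c a * y + ((\<Sum>p\<in>I. c p * x p) + R))\<^sup>2))
        \<partial>density lborel (normal_density 0 (sf a)))" by (simp only: eqy)
    also have "\<dots> = ennreal (exp (- s * ((\<Sum>p\<in>I. c p * x p) + R)\<^sup>2 / D1) / sqrt D1)"
      using gauss_1d[OF sfp, of s "c a" a] D1p unfolding D1_def by simp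
    also have "\<dots> = ennreal (1 / sqrt D1) * ennreal (exp (- (s / D1) * ((\<Sum>p\<in>I. c p * x p) + R)\<^sup>2))"
      using D1p by (simp add: ennreal_mult[symmetric] field_simps)
    finally show ?thesis .
  qed
  have "(\<integral>\<^sup>+\<omega>. ennreal (exp (- s * ((\<Sum>p\<in>insert a I. c p * \<omega> p) + R)\<^sup>2))
       \<partial>PiM (insert a I) (\<lambda>p. density lborel (normal_density 0 (sf p))))
     = (\<integral>\<^sup>+x. ennreal (1 / sqrt D1) * ennreal (exp (- (s / D1) * ((\<Sum>p\<in>I. c p * x p) + R)\<^sup>2))
       \<partial>PiM I (\<lambda>p. density lborel (normal_density 0 (sf p))))"
  proof -
    have m2: "(\<lambda>\<omega>. ennreal (exp (- s * ((\<Sum>p\<in>insert a I. c p * \<omega> p) + R)\<^sup>2)))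
        \<in> borel_measurable (PiM (insert a I) (\<lambda>p. density lborel (normal_density 0 (sf p))))"
      by measurable
    show ?thesis by (simp only: product_nn_integral_insert[OF insert.hyps m2] inner)
  qed
  also have "\<dots> = ennreal (1 / sqrt D1) * ennreal (exp (- (s / D1) * R\<^sup>2 / (1 + 2 * (s / D1) * VI)) / sqrt (1 + 2 * (s / D1) * VI))"
  proof -
    have IH': "(\<integral>\<^sup>+\<omega>. ennreal (exp (- (s / D1) * ((\<Sum>p\<in>I. c p * \<omega> p) + R)\<^sup>2))
       \<partial>PiM I (\<lambda>p. density lborel (normal_density 0 (sf p))))
      = ennreal (exp (- (s / D1) * R\<^sup>2 / (1 + 2 * (s / D1) * VI)) / sqrt (1 + 2 * (s / D1) * VI))"
      using insert.IH[OF pos2[unfolded VI_def], of R] unfolding VI_def .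
      have m1: "(\<lambda>x. ennreal (exp (- (s / D1) * ((\<Sum>p\<in>I. c p * x p) + R)\<^sup>2)))
        \<in> borel_measurable (PiM I (\<lambda>p. density lborel (normal_density 0 (sf p))))"
        by measurable
      show ?thesis
        by (simp only: nn_integral_cmult[OF m1] IH')
  qed
  also have "\<dots> = ennreal (exp (- s * R\<^sup>2 / (1 + 2 * s * (\<Sum>p\<in>insert a I. (c p)\<^sup>2 * (sf p)\<^sup>2)))
               / sqrt (1 + 2 * s * (\<Sum>p\<in>insert a I. (c p)\<^sup>2 * (sf p)\<^sup>2)))"
  proof -
    have e3: "1 / sqrt D1 * (exp (- (s / D1) * R\<^sup>2 / (1 + 2 * (s / D1) * VI)) / sqrt (1 + 2 * (s / D1) * VI))
       = exp (- s * R\<^sup>2 / (1 + 2 * s * ((c a)\<^sup>2 * (sf a)\<^sup>2 + VI))) / sqrt (1 + 2 * s * ((c a)\<^sup>2 * (sf a)\<^sup>2 + VI))"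
      by (rule alg_e3[OF D1p _ pos]) (simp add: D1_def)
    show ?thesis
      apply (subst ennreal_mult'[symmetric])
       apply (simp add: D1p less_imp_le)
      apply (simp only: e3 V)
      done
  qed
  finally show ?case .
qed


lemma meas_comp_dens:
  "p \<in> I \<Longrightarrow> (\<lambda>x. x p) \<in> borel_measurable (PiM I (\<lambda>p. density lborel (f p)))"
proof -
  assume "p \<in> I"
  then have "(\<lambda>x. x p) \<in> PiM I (\<lambda>p. density lborel (f p)) \<rightarrow>\<^sub>M density lborel (f p)"
    by (rule measurable_component_singleton)
  then show ?thesis by (simp cong: measurable_cong_sets)
qed

lemma meas_lin:
  assumes "\<And>r. r \<in> R \<Longrightarrow> (r, k) \<in> I"
  shows "(\<lambda>\<omega>. ennreal (exp (- s * (\<Sum>r\<in>R. \<alpha> r * \<omega> (r, k))\<^sup>2))) \<in> borel_measurable (PiM I (\<lambda>p. density lborel (f p)))"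
proof -
  have lin[measurable]: "(\<lambda>\<omega>. \<Sum>r\<in>R. \<alpha> r * \<omega> (r, k)) \<in> borel_measurable (PiM I (\<lambda>p. density lborel (f p)))"
    by (intro borel_measurable_sum borel_measurable_times borel_measurable_const meas_comp_dens assms)
  show ?thesis by measurable
qed

lemma meas_prod_lin:
  assumes "\<And>r k. r \<in> R \<Longrightarrow> k \<in> K \<Longrightarrow> (r, k) \<in> I"
  shows "(\<lambda>\<omega>. \<Prod>k\<in>K. ennreal (exp (- s * (\<Sum>r\<in>R. \<alpha> r * \<omega> (r, k))\<^sup>2))) \<in> borel_measurable (PiM I (\<lambda>p. density lborel (f p)))"
  by (intro borel_measurable_prod_ennreal meas_lin assms)

lemma sum_times_single: "(\<Sum>p\<in>R \<times> {d}. h p) = (\<Sum>r\<in>R. h (r, d))"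
proof -
  have "R \<times> {d} = (\<lambda>r. (r, d)) ` R" by auto
  then show ?thesis by (simp add: sum.reindex inj_on_def)
qed

lemma block_prod:
  fixes sf :: "'r \<times> nat \<Rightarrow> real" and sg \<alpha> :: "'r \<Rightarrow> real"
  assumes fin: "finite R" and sfp: "\<And>p. sf p > 0" and sfg: "\<And>r k. sf (r, k) = sg r"
    and pos: "1 + 2 * s * (\<Sum>r\<in>R. (\<alpha> r)\<^sup>2 * (sg r)\<^sup>2) > 0"
  shows "(\<integral>\<^sup>+\<omega>. (\<Prod>k<d. ennreal (exp (- s * (\<Sum>r\<in>R. \<alpha> r * \<omega> (r, k))\<^sup>2)))
       \<partial>PiM (R \<times> {..<d}) (\<lambda>p. density lborel (normal_density 0 (sf p))))
     = ennreal (1 / sqrt (1 + 2 * s * (\<Sum>r\<in>R. (\<alpha> r)\<^sup>2 * (sg r)\<^sup>2))) ^ d"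
proof (induction d)
  case 0
  show ?case by (simp add: PiM_empty nn_integral_count_space_finite)
next
  case (Suc d)
  interpret product_sigma_finite "\<lambda>p. density lborel (normal_density 0 (sf p))"
    by (rule product_sigma_finite.intro) (rule prob_space_imp_sigma_finite[OF prob_space_normal_density[OF sfp]])
  define V where "V = (\<Sum>r\<in>R. (\<alpha> r)\<^sup>2 * (sg r)\<^sup>2)"
  define E where "E = ennreal (1 / sqrt (1 + 2 * s * V))"
  define M where "M = (\<lambda>p. density lborel (normal_density 0 (sf p)))"
  define g where "g = (\<lambda>k (\<omega>::'r \<times> nat \<Rightarrow> real). ennreal (exp (- s * (\<Sum>r\<in>R. \<alpha> r * \<omega> (r, k))\<^sup>2)))"
  have IJ: "R \<times> {..<d} \<inter> R \<times> {d} = {}" "finite (R \<times> {..<d})" "finite (R \<times> {d})"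
    using fin by auto
  have U: "R \<times> {..<Suc d} = R \<times> {..<d} \<union> R \<times> {d}" by auto
  have mf: "(\<lambda>\<omega>. \<Prod>k<Suc d. g k \<omega>) \<in> borel_measurable (PiM (R \<times> {..<d} \<union> R \<times> {d}) M)"
    unfolding g_def M_def by (rule meas_prod_lin) auto
  have blk: "(\<integral>\<^sup>+y. g d y \<partial>PiM (R \<times> {d}) M) = E"
  proof -
    have s1: "(\<Sum>r\<in>R. \<alpha> r * y (r, d)) = (\<Sum>p\<in>R \<times> {d}. \<alpha> (fst p) * y p) + 0" for y :: "'r \<times> nat \<Rightarrow> real"
      by (simp add: sum_times_single)
    have s2: "(\<Sum>p\<in>R \<times> {d}. (\<alpha> (fst p))\<^sup>2 * (sf p)\<^sup>2) = V"
      unfolding V_def by (simp add: sum_times_single sfg)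
    have "(\<integral>\<^sup>+y. g d y \<partial>PiM (R \<times> {d}) M)
       = (\<integral>\<^sup>+y. ennreal (exp (- s * ((\<Sum>p\<in>R \<times> {d}. \<alpha> (fst p) * y p) + 0)\<^sup>2)) \<partial>PiM (R \<times> {d}) M)"
      unfolding g_def by (simp only: s1)
    also have "\<dots> = ennreal (exp (- s * 0\<^sup>2 / (1 + 2 * s * V)) / sqrt (1 + 2 * s * V))"
    proof -
      have "1 + 2 * s * (\<Sum>p\<in>R \<times> {d}. (\<alpha> (fst p))\<^sup>2 * (sf p)\<^sup>2) > 0"
        using pos unfolding s2 V_def .
      from gauss_PiM[where I="R \<times> {d}" and sf=sf and s=s and c="\<lambda>p. \<alpha> (fst p)" and R=0, OF IJ(3) sfp this]
      have "(\<integral>\<^sup>+\<omega>. ennreal (exp (- s * ((\<Sum>p\<in>R \<times> {d}. \<alpha> (fst p) * \<omega> p) + 0)\<^sup>2)) \<partial>PiM (R \<times> {d}) (\<lambda>p. density lborel (normal_density 0 (sf p))))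
        = ennreal (exp (- s * 0\<^sup>2 / (1 + 2 * s * V)) / sqrt (1 + 2 * s * V))" unfolding s2 .
      then show ?thesis unfolding M_def .
    qed
    finally show ?thesis unfolding E_def by simp
  qed
  have "(\<integral>\<^sup>+\<omega>. (\<Prod>k<Suc d. g k \<omega>) \<partial>PiM (R \<times> {..<Suc d}) M)
     = (\<integral>\<^sup>+x. (\<integral>\<^sup>+y. (\<Prod>k<Suc d. g k (merge (R \<times> {..<d}) (R \<times> {d}) (x, y))) \<partial>PiM (R \<times> {d}) M) \<partial>PiM (R \<times> {..<d}) M)"
    unfolding U M_def by (rule product_nn_integral_fold[OF IJ mf[unfolded M_def]])
  also have "\<dots> = (\<integral>\<^sup>+x. (\<integral>\<^sup>+y. (\<Prod>k<d. g k x) * g d y \<partial>PiM (R \<times> {d}) M) \<partial>PiM (R \<times> {..<d}) M)"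
  proof -
    have "(\<Prod>k<Suc d. g k (merge (R \<times> {..<d}) (R \<times> {d}) (x, y))) = (\<Prod>k<d. g k x) * g d y" for x y
    proof -
      have "g k (merge (R \<times> {..<d}) (R \<times> {d}) (x, y)) = g k x" if "k < d" for k
        unfolding g_def merge_def using that by (auto intro!: sum.cong arg_cong[where f="\<lambda>t. ennreal (exp (- s * t\<^sup>2))"])
      moreover have "g d (merge (R \<times> {..<d}) (R \<times> {d}) (x, y)) = g d y"
        unfolding g_def merge_def by (auto intro!: sum.cong arg_cong[where f="\<lambda>t. ennreal (exp (- s * t\<^sup>2))"])
      ultimately show ?thesis by simp
    qed
    then show ?thesis by simp
  qed
  also have "\<dots> = (\<integral>\<^sup>+x. (\<Prod>k<d. g k x) * E \<partial>PiM (R \<times> {..<d}) M)"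
  proof (rule nn_integral_cong)
    fix x
    have mg: "g d \<in> borel_measurable (PiM (R \<times> {d}) M)" unfolding g_def M_def by (rule meas_lin) auto
    show "(\<integral>\<^sup>+y. (\<Prod>k<d. g k x) * g d y \<partial>PiM (R \<times> {d}) M) = (\<Prod>k<d. g k x) * E"
      by (simp only: nn_integral_cmult[OF mg] blk)
  qed
  also have "\<dots> = (\<integral>\<^sup>+x. (\<Prod>k<d. g k x) \<partial>PiM (R \<times> {..<d}) M) * E"
  proof -
    have mp: "(\<lambda>x. \<Prod>k<d. g k x) \<in> borel_measurable (PiM (R \<times> {..<d}) M)" unfolding g_def M_def by (rule meas_prod_lin) auto
    show ?thesis by (rule nn_integral_multc[OF mp])
  qed
  also have "\<dots> = E ^ Suc d"
    using Suc.IH unfolding g_def M_def E_def V_def by (simp add: mult.commute)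
  finally show ?case unfolding g_def M_def E_def V_def .
qed


lemma rho_eq:
  fixes \<sigma> \<tau> c cb :: real
  assumes "c \<ge> 1" "cb \<ge> 1" "\<sigma> > 0"
  defines "a \<equiv> \<sigma>\<^sup>2 * (cb + 1) / cb" and "b \<equiv> (c - 1) * (c * (\<sigma>\<^sup>2 + 2 * \<tau>\<^sup>2) - 2 * \<tau>\<^sup>2) / c\<^sup>2"
  shows "rho_bound \<sigma> \<tau> c cb = 4 * a * b / (a + b)\<^sup>2"
proof -
  define K where "K = c * (\<sigma>\<^sup>2 + 2 * \<tau>\<^sup>2) - 2 * \<tau>\<^sup>2"
  have c0: "c > 0" "cb > 0" using assms by auto
  have Dn: "- c * (\<sigma>\<^sup>2 + 4 * \<tau>\<^sup>2) * cb + c\<^sup>2 * (\<sigma>\<^sup>2 + 2 * (\<sigma>\<^sup>2 + \<tau>\<^sup>2) * cb) + 2 * \<tau>\<^sup>2 * cb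
     = \<sigma>\<^sup>2 * (cb + 1) * c\<^sup>2 + (c - 1) * K * cb"
    unfolding K_def by (simp add: algebra_simps power2_eq_square)
  have ab: "a + b = (\<sigma>\<^sup>2 * (cb + 1) * c\<^sup>2 + (c - 1) * K * cb) / (cb * c\<^sup>2)"
    unfolding a_def b_def K_def[symmetric] using c0 by (simp add: field_simps)
  have ab2: "4 * a * b = 4 * \<sigma>\<^sup>2 * (cb + 1) * (c - 1) * K / (cb * c\<^sup>2)"
    unfolding a_def b_def K_def[symmetric] using c0 by (simp add: field_simps)
  have K0: "K > 0"
  proof -
    have "K = c * \<sigma>\<^sup>2 + 2 * \<tau>\<^sup>2 * (c - 1)" unfolding K_def by (simp add: algebra_simps)
    moreover have "c * \<sigma>\<^sup>2 > 0" using assms c0 by simp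
    moreover have "2 * \<tau>\<^sup>2 * (c - 1) \<ge> 0" using assms by simp
    ultimately show ?thesis by linarith
  qed
  define P where "P = \<sigma>\<^sup>2 * (cb + 1) * c\<^sup>2 + (c - 1) * K * cb"
  define W where "W = 4 * \<sigma>\<^sup>2 * (cb + 1) * (c - 1) * K"
  define Z where "Z = cb * c\<^sup>2"
  have Z0: "Z > 0" unfolding Z_def using c0 by simp
  have "(W / Z) / (P / Z)\<^sup>2 = W * Z / P\<^sup>2"
    using Z0 by (simp add: power_divide field_simps power2_eq_square)
  then have "4 * a * b / (a + b)\<^sup>2 = W * Z / P\<^sup>2"
    unfolding ab ab2 W_def[symmetric] P_def[symmetric] Z_def[symmetric] by (simp add: W_def)
  moreover have "rho_bound \<sigma> \<tau> c cb = W * Z / P\<^sup>2"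
    unfolding rho_bound_def Dn P_def[symmetric] K_def[symmetric] W_def Z_def
    by (simp add: algebra_simps)
  ultimately show ?thesis by simp
qed

lemma a_gt_b:
  fixes \<sigma> \<tau> c cb :: real
  assumes "c \<ge> 1" "cb \<ge> 1" "\<tau> > 0" "\<sigma> > 0"
    and cond: "\<sigma> > sqrt (2 * cb) * \<tau> * (c - 1) / sqrt (c * (c + cb))"
  shows "\<sigma>\<^sup>2 * (cb + 1) / cb > (c - 1) * (c * (\<sigma>\<^sup>2 + 2 * \<tau>\<^sup>2) - 2 * \<tau>\<^sup>2) / c\<^sup>2"
proof -
  have c0: "c > 0" "cb > 0" using assms by auto
  define Rr where "Rr = sqrt (2 * cb) * \<tau> * (c - 1) / sqrt (c * (c + cb))"
  have R0: "Rr \<ge> 0" unfolding Rr_def using assms by simp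
  have "Rr\<^sup>2 < \<sigma>\<^sup>2" using R0 cond unfolding Rr_def[symmetric]
    by (simp add: power_strict_mono)
  moreover have "Rr\<^sup>2 = 2 * cb * \<tau>\<^sup>2 * (c - 1)\<^sup>2 / (c * (c + cb))"
    unfolding Rr_def using c0 by (simp add: power_divide power_mult_distrib)
  ultimately have s2: "2 * cb * \<tau>\<^sup>2 * (c - 1)\<^sup>2 < \<sigma>\<^sup>2 * (c * (c + cb))"
    using c0 by (simp add: divide_less_eq)
  have "\<sigma>\<^sup>2 * (cb + 1) / cb - (c - 1) * (c * (\<sigma>\<^sup>2 + 2 * \<tau>\<^sup>2) - 2 * \<tau>\<^sup>2) / c\<^sup>2
      = (\<sigma>\<^sup>2 * (c * (c + cb)) - 2 * cb * \<tau>\<^sup>2 * (c - 1)\<^sup>2) / (cb * c\<^sup>2)"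
    using c0 by (simp add: field_simps power2_eq_square)
  moreover have "(\<sigma>\<^sup>2 * (c * (c + cb)) - 2 * cb * \<tau>\<^sup>2 * (c - 1)\<^sup>2) / (cb * c\<^sup>2) > 0"
    using s2 c0 by simp
  ultimately show ?thesis by simp
qed

lemma rho_range:
  fixes a b :: real
  assumes "a > b" "b \<ge> 0"
  shows "0 \<le> 4 * a * b / (a + b)\<^sup>2 \<and> 4 * a * b / (a + b)\<^sup>2 < 1"
proof -
  have "(a + b)\<^sup>2 > 0" using assms by simp
  moreover have "4 * a * b < (a + b)\<^sup>2"
  proof -
    have "(a + b)\<^sup>2 - 4 * a * b = (a - b)\<^sup>2" by (simp add: power2_eq_square algebra_simps)
    moreover have "(a - b)\<^sup>2 > 0" using assms by simp
    ultimately show ?thesis by linarith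
  qed
  ultimately show ?thesis using assms by (simp add: divide_less_eq)
qed

lemma chern_alg:
  fixes a b :: real
  assumes "a > b" "b > 0"
  defines "s \<equiv> (a - b) / (2 * a * b)"
  shows "(1 + s * a) * (1 - s * b) = (a + b)\<^sup>2 / (4 * a * b)" "s > 0" "1 - s * b > 0"
proof -
  show "(1 + s * a) * (1 - s * b) = (a + b)\<^sup>2 / (4 * a * b)"
    unfolding s_def using assms by (simp add: field_simps power2_eq_square)
  show "s > 0" unfolding s_def using assms by simp
  have "s * b = (a - b) / (2 * a)" unfolding s_def using assms by (simp add: field_simps)
  moreover have "(a - b) / (2 * a) < 1" using assms by (simp add: divide_less_eq)
  ultimately show "1 - s * b > 0" by simp
qed

definition ecoef :: "nat \<Rightarrow> (nat \<Rightarrow> nat) \<Rightarrow> nat \<Rightarrow> nat \<Rightarrow> real" where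
  "ecoef n z m r = (if r = m then 1 else 0) + (if r = n + z m then 1 else 0)"

lemma sum_if_card: "finite A \<Longrightarrow> (\<Sum>x\<in>A. if P x then 1 else 0 :: real) = real (card {x\<in>A. P x})"
  by (simp add: sum.inter_filter[symmetric])

lemma datapt_lin:
  assumes "m \<in> {1..n}" "z m \<in> {1, 2}"
  shows "datapt n z m \<omega> k = (\<Sum>r\<in>{1..n+2}. ecoef n z m r * \<omega> (r, k))"
proof -
  have "(\<Sum>r\<in>{1..n+2}. ecoef n z m r * \<omega> (r, k))
      = (\<Sum>r\<in>{1..n+2}. (if r = m then \<omega> (r, k) else 0)) + (\<Sum>r\<in>{1..n+2}. (if r = n + z m then \<omega> (r, k) else 0))"
  proof -
    have "ecoef n z m r * \<omega> (r, k) = (if r = m then \<omega> (r, k) else 0) + (if r = n + z m then \<omega> (r, k) else 0)" for r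
      unfolding ecoef_def by (simp add: ring_distribs)
    then show ?thesis by (simp only: sum.distrib)
  qed
  also have "\<dots> = \<omega> (m, k) + \<omega> (n + z m, k)"
  proof -
    have "m \<in> {1..n+2}" "n + z m \<in> {1..n+2}" using assms by auto
    then show ?thesis by (simp only: sum.delta finite_atLeastAtMost if_True)
  qed
  finally show ?thesis unfolding datapt_def center_def by simp
qed

lemma centroid_lin:
  assumes "C \<subseteq> {1..n}" "\<forall>m\<in>{1..n}. z m \<in> {1, 2}"
  shows "centroid n z C \<omega> k = (\<Sum>r\<in>{1..n+2}. ((\<Sum>m\<in>C. ecoef n z m r) / real (card C)) * \<omega> (r, k))"
proof -
  have fin: "finite C" using assms(1) finite_subset by blast
  have "(\<Sum>m\<in>C. datapt n z m \<omega> k) = (\<Sum>m\<in>C. \<Sum>r\<in>{1..n+2}. ecoef n z m r * \<omega> (r, k))"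
    using assms by (intro sum.cong refl datapt_lin) auto
  also have "\<dots> = (\<Sum>r\<in>{1..n+2}. \<Sum>m\<in>C. ecoef n z m r * \<omega> (r, k))"
    by (rule sum.swap)
  also have "\<dots> = (\<Sum>r\<in>{1..n+2}. (\<Sum>m\<in>C. ecoef n z m r) * \<omega> (r, k))"
    by (simp add: sum_distrib_right)
  finally have "(\<Sum>m\<in>C. datapt n z m \<omega> k) = (\<Sum>r\<in>{1..n+2}. (\<Sum>m\<in>C. ecoef n z m r) * \<omega> (r, k))" .
  then show ?thesis
    unfolding centroid_def by (simp only: sum_divide_distrib) (intro sum.cong refl, simp add: sum_divide_distrib[symmetric])
qed

lemma sqdist_lin:
  assumes "C \<subseteq> {1..n}" "\<forall>m\<in>{1..n}. z m \<in> {1, 2}" "i \<in> {1..n}"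
  shows "sqdist d (datapt n z i \<omega>) (centroid n z C \<omega>)
    = (\<Sum>k<d. (\<Sum>r\<in>{1..n+2}. (ecoef n z i r - (\<Sum>m\<in>C. ecoef n z m r) / real (card C)) * \<omega> (r, k))\<^sup>2)"
  unfolding sqdist_def
proof (intro sum.cong refl arg_cong[where f="\<lambda>x. x\<^sup>2"])
  fix k
  show "datapt n z i \<omega> k - centroid n z C \<omega> k =
    (\<Sum>r\<in>{1..n+2}. (ecoef n z i r - (\<Sum>m\<in>C. ecoef n z m r) / real (card C)) * \<omega> (r, k))"
    using assms by (simp add: datapt_lin centroid_lin left_diff_distrib sum_subtractf)
qed

lemma ecoef_low:
  assumes "r \<le> n" "z m \<in> {1, 2}"
  shows "ecoef n z m r = (if r = m then 1 else 0)"
  using assms unfolding ecoef_def by auto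

lemma ecoef_high:
  assumes "m \<le> n" "l \<ge> 1"
  shows "ecoef n z m (n + l) = (if z m = l then 1 else 0)"
  using assms unfolding ecoef_def by auto

lemma sum_split_n2: fixes n :: nat shows "(\<Sum>r\<in>{1..n+2}. f r) = (\<Sum>r\<in>{1..n}. f r) + f (n + 1) + f (n + 2)"
proof -
  have "{1..n+2} = insert (n + 2) (insert (n + 1) {1..n})" by auto
  then show ?thesis by (simp add: add.commute add.left_commute)
qed

lemma xi_part:
  assumes C: "C \<subseteq> {1..n}" "C \<noteq> {}" and z: "\<forall>m\<in>{1..n}. z m \<in> {1, 2}" and i: "i \<in> {1..n}"
  shows "(\<Sum>r\<in>{1..n}. (ecoef n z i r - (\<Sum>m\<in>C. ecoef n z m r) / real (card C))\<^sup>2)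
    = 1 - 2 * (if i \<in> C then 1 else 0) / real (card C) + 1 / real (card C)"
proof -
  have fin: "finite C" using C finite_subset by blast
  define cc where "cc = real (card C)"
  have cc0: "cc > 0" unfolding cc_def using fin C by (simp add: card_gt_0_iff)
  have "(\<Sum>r\<in>{1..n}. (ecoef n z i r - (\<Sum>m\<in>C. ecoef n z m r) / cc)\<^sup>2)
     = (\<Sum>r\<in>{1..n}. (if r = i then 1 else 0) - 2 * (if r = i \<and> i \<in> C then 1 else 0) / cc + (if r \<in> C then 1 else 0) / cc\<^sup>2)"
  proof (intro sum.cong refl)
    fix r assume r: "r \<in> {1..n}"
    have e1: "ecoef n z i r = (if r = i then 1 else 0)" using r i z by (intro ecoef_low) auto
    have e2: "(\<Sum>m\<in>C. ecoef n z m r) = (if r \<in> C then 1 else 0)"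
    proof -
      have "(\<Sum>m\<in>C. ecoef n z m r) = (\<Sum>m\<in>C. if r = m then 1 else 0)"
        using r C z by (intro sum.cong refl ecoef_low) auto
      then show ?thesis using fin by (simp add: sum.delta)
    qed
    show "(ecoef n z i r - (\<Sum>m\<in>C. ecoef n z m r) / cc)\<^sup>2 = (if r = i then 1 else 0) - 2 * (if r = i \<and> i \<in> C then 1 else 0) / cc + (if r \<in> C then 1 else 0) / cc\<^sup>2"
      unfolding e1 e2 using cc0 by (auto simp: power2_eq_square field_simps)
  qed
  also have "\<dots> = 1 - 2 * (if i \<in> C then 1 else 0) / cc + real (card C) / cc\<^sup>2"
  proof -
    have "(\<Sum>r\<in>{1..n}. (if r \<in> C then 1 else 0 :: real)) = real (card C)"
    proof -
      have "{r\<in>{1..n}. r \<in> C} = C" using C by auto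
      then show ?thesis by (simp add: sum_if_card)
    qed
    moreover have "(\<Sum>r\<in>{1..n}. (if r = i \<and> i \<in> C then 1 else 0 :: real)) = (if i \<in> C then 1 else 0)"
      using i by (cases "i \<in> C") (simp_all add: sum.delta)
    ultimately show ?thesis using i
      by (simp add: sum.distrib sum_subtractf sum_divide_distrib[symmetric] sum_distrib_left[symmetric] sum.delta)
  qed
  also have "\<dots> = 1 - 2 * (if i \<in> C then 1 else 0) / cc + 1 / cc"
    unfolding cc_def using cc0[unfolded cc_def] by (simp add: power2_eq_square)
  finally show ?thesis unfolding cc_def .
qed


lemma var_split:
  fixes n :: nat and f :: "nat \<Rightarrow> real"
  shows "(\<Sum>r\<in>{1..n+2}. (f r)\<^sup>2 * (if r \<le> n then \<sigma> else \<tau>)\<^sup>2)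
     = \<sigma>\<^sup>2 * (\<Sum>r\<in>{1..n}. (f r)\<^sup>2) + \<tau>\<^sup>2 * ((f (n + 1))\<^sup>2 + (f (n + 2))\<^sup>2)"
proof -
  have "(\<Sum>r\<in>{1..n}. (f r)\<^sup>2 * (if r \<le> n then \<sigma> else \<tau>)\<^sup>2) = \<sigma>\<^sup>2 * (\<Sum>r\<in>{1..n}. (f r)\<^sup>2)"
    by (simp add: sum_distrib_left mult.commute)
  then show ?thesis by (simp add: sum_split_n2 algebra_simps)
qed

lemma mu_alg:
  fixes p1 p2 cc :: real
  assumes "p1 + p2 = cc" "p1 \<ge> 1" "p2 \<ge> 0" "cc > 0"
  shows "(1 - p1 / cc)\<^sup>2 + (0 - p2 / cc)\<^sup>2 \<le> 2 * (cc - 1)\<^sup>2 / cc\<^sup>2"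
proof -
  have "1 - p1 / cc = p2 / cc" using assms by (simp add: field_simps)
  moreover have "p2\<^sup>2 \<le> (cc - 1)\<^sup>2" using assms by (intro power_mono) auto
  ultimately show ?thesis using assms by (simp add: power_divide divide_right_mono)
qed

lemma mu_part:
  assumes C: "C \<subseteq> {1..n}" and z: "\<forall>m\<in>{1..n}. z m \<in> {1, 2}" and i: "i \<in> C"
  shows "(ecoef n z i (n + 1) - (\<Sum>m\<in>C. ecoef n z m (n + 1)) / real (card C))\<^sup>2
       + (ecoef n z i (n + 2) - (\<Sum>m\<in>C. ecoef n z m (n + 2)) / real (card C))\<^sup>2
     \<le> 2 * (real (card C) - 1)\<^sup>2 / (real (card C))\<^sup>2"
proof -
  have fin: "finite C" using C finite_subset by blast
  have cc0: "real (card C) > 0" using fin i by (auto simp: card_gt_0_iff)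
  have iN: "i \<le> n" using i C by auto
  have S: "(\<Sum>m\<in>C. ecoef n z m (n + l)) = real (card {m\<in>C. z m = l})" if "l \<ge> 1" for l
  proof -
    have "(\<Sum>m\<in>C. ecoef n z m (n + l)) = (\<Sum>m\<in>C. if z m = l then 1 else 0)"
      using C that by (intro sum.cong refl ecoef_high) auto
    then show ?thesis using fin by (simp add: sum_if_card)
  qed
  define p1 where "p1 = real (card {m\<in>C. z m = 1})"
  define p2 where "p2 = real (card {m\<in>C. z m = 2})"
  have psum: "p1 + p2 = real (card C)"
  proof -
    have "{m\<in>C. z m = 1} \<union> {m\<in>C. z m = 2} = C" using C z by auto
    moreover have "{m\<in>C. z m = 1} \<inter> {m\<in>C. z m = 2} = {}" by auto
    ultimately have "card {m\<in>C. z m = 1} + card {m\<in>C. z m = 2} = card C"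
      using fin by (metis (no_types, lifting) card_Un_disjoint finite_Un)
    then show ?thesis unfolding p1_def p2_def by (metis of_nat_add)
  qed
  have e1: "ecoef n z i (n + 1) = (if z i = 1 then 1 else 0)" using iN by (intro ecoef_high) auto
  have e2: "ecoef n z i (n + 2) = (if z i = 2 then 1 else 0)" using iN by (intro ecoef_high) auto
  have S1: "(\<Sum>m\<in>C. ecoef n z m (n + 1)) = p1" using S[of 1] unfolding p1_def by simp
  have S2: "(\<Sum>m\<in>C. ecoef n z m (n + 2)) = p2" using S[of 2] unfolding p2_def by simp
  have p20: "p1 \<ge> 0" "p2 \<ge> 0" unfolding p1_def p2_def by auto
  have zi: "z i = 1 \<or> z i = 2" using z i C by auto
  show ?thesis
  proof (cases "z i = 1")
    case True
    have "p1 \<ge> 1"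
    proof -
      have "{m\<in>C. z m = 1} \<noteq> {}" using i True by auto
      then have "card {m\<in>C. z m = 1} \<ge> 1" using fin by (simp add: Suc_le_eq card_gt_0_iff)
      then show ?thesis unfolding p1_def by simp
    qed
    then show ?thesis
      using mu_alg[OF psum _ p20(2) cc0] True unfolding e1 e2 S1 S2 by simp
  next
    case False
    then have F: "z i = 2" using zi by simp
    have "p2 \<ge> 1"
    proof -
      have "{m\<in>C. z m = 2} \<noteq> {}" using i F by auto
      then have "card {m\<in>C. z m = 2} \<ge> 1" using fin by (simp add: Suc_le_eq card_gt_0_iff)
      then show ?thesis unfolding p2_def by simp
    qed
    moreover have "p2 + p1 = real (card C)" using psum by simp
    ultimately have "(1 - p2 / real (card C))\<^sup>2 + (0 - p1 / real (card C))\<^sup>2 \<le> 2 * (real (card C) - 1)\<^sup>2 / (real (card C))\<^sup>2"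
      using mu_alg[of p2 p1 "real (card C)"] cc0 p20 by simp
    then show ?thesis using F unfolding e1 e2 S1 S2 by (simp add: add.commute)
  qed
qed


lemma lam_opt:
  fixes A B :: real assumes "A > 0" "B > 0"
  shows "sqrt (B / A) / 2 * A + 1 / (2 * sqrt (B / A)) * B = sqrt (A * B)"
proof -
  define u where "u = sqrt A"
  define v where "v = sqrt B"
  have u0: "u > 0" "v > 0" using assms u_def v_def by auto
  have A: "A = u\<^sup>2" "B = v\<^sup>2" using assms u_def v_def by auto
  show ?thesis unfolding A using u0
    by (simp add: real_sqrt_divide real_sqrt_mult field_simps power2_eq_square)
qed

lemma final_num:
  fixes X Y \<rho> :: real
  assumes "X > 0" "Y > 0" "\<rho> > 0" "X * Y \<ge> 1 / \<rho>"
  shows "sqrt ((1 / sqrt X) ^ d * (1 / sqrt Y) ^ d) \<le> \<rho> powr (real d / 4)"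
proof -
  define W where "W = X * Y"
  have W0: "W > 0" using assms W_def by simp
  have "(1 / sqrt X) ^ d * (1 / sqrt Y) ^ d = (1 / sqrt W) ^ d"
    unfolding W_def by (simp add: power_mult_distrib[symmetric] real_sqrt_mult)
  then have "sqrt ((1 / sqrt X) ^ d * (1 / sqrt Y) ^ d) = (sqrt (1 / sqrt W)) ^ d"
    by (simp add: real_sqrt_power)
  also have "sqrt (1 / sqrt W) = (1 / W) powr (1 / 4)"
  proof -
    have "1 / sqrt W = (1 / W) powr (1 / 2)" using W0 by (simp add: powr_half_sqrt real_sqrt_divide)
    then have "sqrt (1 / sqrt W) = ((1 / W) powr (1 / 2)) powr (1 / 2)"
      using W0 by (simp add: powr_half_sqrt)
    also have "\<dots> = (1 / W) powr (1 / 4)" by (simp add: powr_powr)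
    finally show ?thesis .
  qed
  also have "((1 / W) powr (1 / 4)) ^ d \<le> (\<rho> powr (1 / 4)) ^ d"
  proof (rule power_mono)
    have "1 / W \<le> \<rho>" using assms W0 unfolding W_def by (simp add: divide_le_eq mult.commute)
    then show "(1 / W) powr (1 / 4) \<le> \<rho> powr (1 / 4)" using W0 by (intro powr_mono2) auto
  qed simp
  also have "(\<rho> powr (1 / 4)) ^ d = \<rho> powr (real d / 4)"
    using assms by (simp add: powr_realpow[symmetric] powr_powr)
  finally show ?thesis .
qed

lemma amgm_pt:
  fixes s l SU SV :: real
  assumes "s > 0" "l > 0" "SU < SV"
  shows "1 \<le> l / 2 * exp (- (s / 2) * SU) + 1 / (2 * l) * exp (- (- s / 2) * SV)"
proof -
  define X where "X = - (s / 4) * SU"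
  define Y where "Y = (s / 4) * SV"
  define u where "u = sqrt l * exp X"
  define v where "v = exp Y / sqrt l"
  have "X + Y > 0" unfolding X_def Y_def using assms by (simp add: algebra_simps)
  then have "1 \<le> exp (X + Y)" by simp
  also have "exp (X + Y) = u * v" unfolding u_def v_def using assms by (simp add: exp_add)
  also have "u * v \<le> (u\<^sup>2 + v\<^sup>2) / 2" using sum_squares_bound[of u v] by simp
  also have "u\<^sup>2 = l * exp (2 * X)"
  proof -
    have "u\<^sup>2 = (sqrt l)\<^sup>2 * (exp X)\<^sup>2" unfolding u_def by (simp add: power_mult_distrib)
    also have "\<dots> = l * exp (2 * X)" using assms by (simp add: exp_double[symmetric] power2_eq_square mult_exp_exp)
    finally show ?thesis .
  qed
  also have "v\<^sup>2 = exp (2 * Y) / l"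
  proof -
    have "v\<^sup>2 = (exp Y)\<^sup>2 / (sqrt l)\<^sup>2" unfolding v_def by (simp add: power_divide)
    also have "\<dots> = exp (2 * Y) / l" using assms by (simp add: power2_eq_square mult_exp_exp)
    finally show ?thesis .
  qed
  also have "(l * exp (2 * X) + exp (2 * Y) / l) / 2 = l / 2 * exp (- (s / 2) * SU) + 1 / (2 * l) * exp (- (- s / 2) * SV)"
    unfolding X_def Y_def by (simp add: field_simps)
  finally show ?thesis .
qed

theorem theorem3p4:
  fixes n d :: nat and \<tau> \<sigma> :: real and z :: "nat \<Rightarrow> nat"
    and C1 C2 :: "nat set" and i :: nat
  assumes "n \<ge> 2" and "d \<ge> 1" and "\<tau> > 0" and "\<sigma> > 0"
    and "\<forall>m\<in>{1..n}. z m \<in> {1, 2}"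
    and "\<exists>m\<in>{1..n}. z m = 1" and "\<exists>m\<in>{1..n}. z m = 2"
    and "C1 \<union> C2 = {1..n}" and "C1 \<inter> C2 = {}" and "C1 \<noteq> {}" and "C2 \<noteq> {}"
    and "i \<in> {1..n}"
    and "(Cj, Cjb) = (if i \<in> C1 then (C1, C2) else (C2, C1))"
    and "c = real (card Cj)" and "cb = real (card Cjb)"
    and "\<sigma> > sqrt (2 * cb) * \<tau> * (c - 1) / sqrt (c * (c + cb))"
  shows "measure (gmm_space n d \<tau> \<sigma>)
           {\<omega> \<in> space (gmm_space n d \<tau> \<sigma>).
              sqdist d (datapt n z i \<omega>) (centroid n z Cjb \<omega>)
                < sqdist d (datapt n z i \<omega>) (centroid n z Cj \<omega>)}
           \<le> rho_bound \<sigma> \<tau> c cb powr (real d / 4)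
         \<and> 0 \<le> rho_bound \<sigma> \<tau> c cb \<and> rho_bound \<sigma> \<tau> c cb < 1"
proof -
  note zf = assms(5)
  have hCj: "Cj = (if i \<in> C1 then C1 else C2)" "Cjb = (if i \<in> C1 then C2 else C1)"
    using assms(13) by (auto split: if_splits)
  have iCj: "i \<in> Cj" using hCj assms(8) assms(12) by auto
  have CjS: "Cj \<subseteq> {1..n}" using hCj assms(8) by auto
  have CjbS: "Cjb \<subseteq> {1..n}" using hCj assms(8) by auto
  have Cjbne: "Cjb \<noteq> {}" using hCj assms(10,11) by auto
  have Cjne: "Cj \<noteq> {}" using iCj by auto
  have iCjb: "i \<notin> Cjb" using hCj assms(9) iCj by auto
  have finj: "finite Cj" "finite Cjb" using CjS CjbS finite_subset by auto
  have "card Cj \<ge> 1" using finj Cjne by (simp add: Suc_le_eq card_gt_0_iff)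
  then have c1: "c \<ge> 1" using assms(14) by simp
  have "card Cjb \<ge> 1" using finj Cjbne by (simp add: Suc_le_eq card_gt_0_iff)
  then have cb1: "cb \<ge> 1" using assms(15) by simp
  define a where "a = \<sigma>\<^sup>2 * (cb + 1) / cb"
  define b where "b = (c - 1) * (c * (\<sigma>\<^sup>2 + 2 * \<tau>\<^sup>2) - 2 * \<tau>\<^sup>2) / c\<^sup>2"
  have agtb: "a > b" unfolding a_def b_def by (rule a_gt_b[OF c1 cb1 assms(3) assms(4) assms(16)])
  have Kp: "c * (\<sigma>\<^sup>2 + 2 * \<tau>\<^sup>2) - 2 * \<tau>\<^sup>2 > 0"
  proof -
    have "c * (\<sigma>\<^sup>2 + 2 * \<tau>\<^sup>2) - 2 * \<tau>\<^sup>2 = c * \<sigma>\<^sup>2 + 2 * \<tau>\<^sup>2 * (c - 1)" by (simp add: algebra_simps)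
    moreover have "c * \<sigma>\<^sup>2 > 0" using assms(4) c1 by simp
    moreover have "2 * \<tau>\<^sup>2 * (c - 1) \<ge> 0" using c1 by simp
    ultimately show ?thesis by linarith
  qed
  have b0: "b \<ge> 0" unfolding b_def using c1 Kp by simp
  have rho: "rho_bound \<sigma> \<tau> c cb = 4 * a * b / (a + b)\<^sup>2"
    unfolding a_def b_def by (rule rho_eq[OF c1 cb1 assms(4)])
  have rr: "0 \<le> rho_bound \<sigma> \<tau> c cb \<and> rho_bound \<sigma> \<tau> c cb < 1"
    using rho_range[OF agtb b0] rho by simp
  define \<Omega> where "\<Omega> = gmm_space n d \<tau> \<sigma>"
  define E where "E = {\<omega> \<in> space \<Omega>. sqdist d (datapt n z i \<omega>) (centroid n z Cjb \<omega>)
                < sqdist d (datapt n z i \<omega>) (centroid n z Cj \<omega>)}"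
  have PE: "measure \<Omega> E \<le> rho_bound \<sigma> \<tau> c cb powr (real d / 4)"
  proof (cases "c = 1")
    case True
    then have "card Cj = 1" using assms(14) by simp
    then obtain x where "Cj = {x}" by (rule card_1_singletonE)
    with iCj have Cji: "Cj = {i}" by simp
    have "E = {}"
    proof -
      have "sqdist d (datapt n z i \<omega>) (centroid n z Cj \<omega>) = 0" for \<omega>
        unfolding Cji sqdist_def centroid_def by simp
      moreover have "sqdist d u v \<ge> 0" for u v unfolding sqdist_def by (intro sum_nonneg) simp
      ultimately show ?thesis unfolding E_def by (auto simp: not_less)
    qed
    then show ?thesis by simp
  next
    case False
    then have c2: "c > 1" using c1 by simp
    have cpos: "c > 0" using c1 by simp
    have b0': "b > 0" unfolding b_def using c2 Kp by simp
    have a0: "a > 0" using agtb b0' by simp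
    have rho0: "rho_bound \<sigma> \<tau> c cb > 0" using rho a0 b0' by simp
    define s where "s = (a - b) / (2 * a * b)"
    have ch: "(1 + s * a) * (1 - s * b) = (a + b)\<^sup>2 / (4 * a * b)" "s > 0" "1 - s * b > 0"
      unfolding s_def using chern_alg[OF agtb b0'] by auto
    define sg where "sg = (\<lambda>r::nat. if r \<le> n then \<sigma> else \<tau>)"
    define \<alpha> where "\<alpha> = (\<lambda>r. ecoef n z i r - (\<Sum>m\<in>Cjb. ecoef n z m r) / real (card Cjb))"
    define \<beta> where "\<beta> = (\<lambda>r. ecoef n z i r - (\<Sum>m\<in>Cj. ecoef n z m r) / real (card Cj))"
    define a' where "a' = (\<Sum>r\<in>{1..n+2}. (\<alpha> r)\<^sup>2 * (sg r)\<^sup>2)"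
    define b' where "b' = (\<Sum>r\<in>{1..n+2}. (\<beta> r)\<^sup>2 * (sg r)\<^sup>2)"
    have a'ge: "a' \<ge> a"
    proof -
      have "a' = \<sigma>\<^sup>2 * (\<Sum>r\<in>{1..n}. (\<alpha> r)\<^sup>2) + \<tau>\<^sup>2 * ((\<alpha> (n + 1))\<^sup>2 + (\<alpha> (n + 2))\<^sup>2)"
        unfolding a'_def sg_def by (rule var_split)
      moreover have "(\<Sum>r\<in>{1..n}. (\<alpha> r)\<^sup>2) = 1 + 1 / cb"
        using xi_part[OF CjbS Cjbne zf assms(12)] iCjb assms(15) unfolding \<alpha>_def by simp
      moreover have "\<tau>\<^sup>2 * ((\<alpha> (n + 1))\<^sup>2 + (\<alpha> (n + 2))\<^sup>2) \<ge> 0" by simp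
      ultimately have "a' \<ge> \<sigma>\<^sup>2 * (1 + 1 / cb)" by simp
      moreover have "\<sigma>\<^sup>2 * (1 + 1 / cb) = a" unfolding a_def using cb1 by (simp add: field_simps)
      ultimately show ?thesis by simp
    qed
    have b'le: "b' \<le> b"
    proof -
      have "b' = \<sigma>\<^sup>2 * (\<Sum>r\<in>{1..n}. (\<beta> r)\<^sup>2) + \<tau>\<^sup>2 * ((\<beta> (n + 1))\<^sup>2 + (\<beta> (n + 2))\<^sup>2)"
        unfolding b'_def sg_def by (rule var_split)
      moreover have "(\<Sum>r\<in>{1..n}. (\<beta> r)\<^sup>2) = 1 - 2 * 1 / c + 1 / c"
        using xi_part[OF CjS Cjne zf assms(12)] iCj assms(14) unfolding \<beta>_def by simp
      moreover have "1 - 2 * 1 / c + 1 / c = 1 - 1 / c" using cpos by (simp add: field_simps)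
      moreover have "(\<beta> (n + 1))\<^sup>2 + (\<beta> (n + 2))\<^sup>2 \<le> 2 * (c - 1)\<^sup>2 / c\<^sup>2"
        using mu_part[OF CjS zf iCj] assms(14) unfolding \<beta>_def by simp
      then have "\<tau>\<^sup>2 * ((\<beta> (n + 1))\<^sup>2 + (\<beta> (n + 2))\<^sup>2) \<le> \<tau>\<^sup>2 * (2 * (c - 1)\<^sup>2 / c\<^sup>2)"
        by (intro mult_left_mono) auto
      ultimately have "b' \<le> \<sigma>\<^sup>2 * (1 - 1 / c) + \<tau>\<^sup>2 * (2 * (c - 1)\<^sup>2 / c\<^sup>2)" by simp
      moreover have "\<sigma>\<^sup>2 * (1 - 1 / c) + \<tau>\<^sup>2 * (2 * (c - 1)\<^sup>2 / c\<^sup>2) = b"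
        unfolding b_def using cpos by (simp add: field_simps power2_eq_square)
      ultimately show ?thesis by simp
    qed
    have b'0: "b' \<ge> 0" unfolding b'_def by (intro sum_nonneg) simp
    define X where "X = 1 + s * a'"
    define Y where "Y = 1 - s * b'"
    have sa: "1 + s * a > 0" using ch(2) a0 by (simp add: add_pos_pos)
    have X1: "X \<ge> 1 + s * a" unfolding X_def using a'ge ch(2) by (simp add: mult_left_mono)
    have Y1: "Y \<ge> 1 - s * b" unfolding Y_def using b'le ch(2) by (simp add: mult_left_mono)
    have Xp: "X > 0" using X1 sa by simp
    have Yp: "Y > 0" using Y1 ch(3) by simp
    have XY: "X * Y \<ge> (1 + s * a) * (1 - s * b)"
      by (rule mult_mono[OF X1 Y1]) (use Xp ch(3) in auto)
    have XYr: "X * Y \<ge> 1 / rho_bound \<sigma> \<tau> c cb"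
      using XY ch(1) rho by simp
    define sf where "sf = (\<lambda>p::nat \<times> nat. sg (fst p))"
    have sfp: "\<And>p. sf p > 0" using assms(3,4) unfolding sf_def sg_def by auto
    have Meq: "(\<lambda>(r, k). density lborel (normal_density 0 (if r \<le> n then \<sigma> else \<tau>)))
        = (\<lambda>p::nat \<times> nat. density lborel (normal_density 0 (sf p)))"
      by (auto simp: sf_def sg_def fun_eq_iff split: prod.splits)
    have \<Omega>eq: "\<Omega> = PiM ({1..n+2} \<times> {..<d}) (\<lambda>p. density lborel (normal_density 0 (sf p)))"
      unfolding \<Omega>_def gmm_space_def Meq ..
    interpret Pr: prob_space \<Omega> unfolding \<Omega>eq by (rule prob_space_PiM) (rule prob_space_normal_density[OF sfp])
    define U where "U = (\<lambda>(\<omega>::nat \<times> nat \<Rightarrow> real) (k::nat). \<Sum>r\<in>{1..n+2}. \<alpha> r * \<omega> (r, k))"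
    define V where "V = (\<lambda>(\<omega>::nat \<times> nat \<Rightarrow> real) (k::nat). \<Sum>r\<in>{1..n+2}. \<beta> r * \<omega> (r, k))"
    have sdU: "sqdist d (datapt n z i \<omega>) (centroid n z Cjb \<omega>) = (\<Sum>k<d. (U \<omega> k)\<^sup>2)" for \<omega>
      unfolding U_def \<alpha>_def by (rule sqdist_lin[OF CjbS zf assms(12)])
    have sdV: "sqdist d (datapt n z i \<omega>) (centroid n z Cj \<omega>) = (\<Sum>k<d. (V \<omega> k)\<^sup>2)" for \<omega>
      unfolding V_def \<beta>_def by (rule sqdist_lin[OF CjS zf assms(12)])
    define Ar where "Ar = (1 / sqrt X) ^ d"
    define Br where "Br = (1 / sqrt Y) ^ d"
    have Ar0: "Ar > 0" "Br > 0" unfolding Ar_def Br_def using Xp Yp by auto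
    define l where "l = sqrt (Br / Ar)"
    have l0: "l > 0" unfolding l_def using Ar0 by simp
    define P1 where "P1 = (\<lambda>\<omega>. \<Prod>k<d. ennreal (exp (- (s / 2) * (\<Sum>r\<in>{1..n+2}. \<alpha> r * \<omega> (r, k))\<^sup>2)))"
    define P2 where "P2 = (\<lambda>\<omega>. \<Prod>k<d. ennreal (exp (- (- s / 2) * (\<Sum>r\<in>{1..n+2}. \<beta> r * \<omega> (r, k))\<^sup>2)))"
    have IA: "integral\<^sup>N \<Omega> P1 = ennreal Ar"
    proof -
      have pos: "1 + 2 * (s / 2) * (\<Sum>r\<in>{1..n+2}. (\<alpha> r)\<^sup>2 * (sg r)\<^sup>2) > 0"
        using Xp unfolding X_def a'_def by simp
      have "integral\<^sup>N \<Omega> P1 = ennreal (1 / sqrt (1 + 2 * (s / 2) * (\<Sum>r\<in>{1..n+2}. (\<alpha> r)\<^sup>2 * (sg r)\<^sup>2))) ^ d"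
        unfolding \<Omega>eq P1_def by (rule block_prod[OF _ sfp _ pos]) (simp_all add: sf_def)
      also have "1 + 2 * (s / 2) * (\<Sum>r\<in>{1..n+2}. (\<alpha> r)\<^sup>2 * (sg r)\<^sup>2) = X" unfolding X_def a'_def by simp
      also have "ennreal (1 / sqrt X) ^ d = ennreal Ar" unfolding Ar_def using Xp by (simp add: ennreal_power)
      finally show ?thesis .
    qed
    have IB: "integral\<^sup>N \<Omega> P2 = ennreal Br"
    proof -
      have pos: "1 + 2 * (- s / 2) * (\<Sum>r\<in>{1..n+2}. (\<beta> r)\<^sup>2 * (sg r)\<^sup>2) > 0"
        using Yp unfolding Y_def b'_def by simp
      have "integral\<^sup>N \<Omega> P2 = ennreal (1 / sqrt (1 + 2 * (- s / 2) * (\<Sum>r\<in>{1..n+2}. (\<beta> r)\<^sup>2 * (sg r)\<^sup>2))) ^ d"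
        unfolding \<Omega>eq P2_def by (rule block_prod[OF _ sfp _ pos]) (simp_all add: sf_def)
      also have "1 + 2 * (- s / 2) * (\<Sum>r\<in>{1..n+2}. (\<beta> r)\<^sup>2 * (sg r)\<^sup>2) = Y" unfolding Y_def b'_def by simp
      also have "ennreal (1 / sqrt Y) ^ d = ennreal Br" unfolding Br_def using Yp by (simp add: ennreal_power)
      finally show ?thesis .
    qed
    have mP1: "P1 \<in> borel_measurable \<Omega>" unfolding \<Omega>eq P1_def by (rule meas_prod_lin) auto
    have mP2: "P2 \<in> borel_measurable \<Omega>" unfolding \<Omega>eq P2_def by (rule meas_prod_lin) auto
    have ptw: "indicator E \<omega> \<le> ennreal (l / 2) * P1 \<omega> + ennreal (1 / (2 * l)) * P2 \<omega>" for \<omega>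
    proof (cases "\<omega> \<in> E")
      case False then show ?thesis by simp
    next
      case True
      then have lt: "(\<Sum>k<d. (U \<omega> k)\<^sup>2) < (\<Sum>k<d. (V \<omega> k)\<^sup>2)" unfolding E_def sdU sdV by simp
      have P1e: "P1 \<omega> = ennreal (exp (- (s / 2) * (\<Sum>k<d. (U \<omega> k)\<^sup>2)))"
      proof -
        have "P1 \<omega> = (\<Prod>k<d. ennreal (exp (- (s / 2) * (U \<omega> k)\<^sup>2)))"
          unfolding P1_def U_def ..
        also have "\<dots> = ennreal (\<Prod>k<d. exp (- (s / 2) * (U \<omega> k)\<^sup>2))"
          by (rule prod_ennreal) simp
        also have "(\<Prod>k<d. exp (- (s / 2) * (U \<omega> k)\<^sup>2)) = exp (\<Sum>k<d. - (s / 2) * (U \<omega> k)\<^sup>2)"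
          by (simp add: exp_sum)
        also have "(\<Sum>k<d. - (s / 2) * (U \<omega> k)\<^sup>2) = - (s / 2) * (\<Sum>k<d. (U \<omega> k)\<^sup>2)"
          by (simp only: sum_distrib_left)
        finally show ?thesis .
      qed
      have P2e: "P2 \<omega> = ennreal (exp (- (- s / 2) * (\<Sum>k<d. (V \<omega> k)\<^sup>2)))"
      proof -
        have "P2 \<omega> = (\<Prod>k<d. ennreal (exp (- (- s / 2) * (V \<omega> k)\<^sup>2)))"
          unfolding P2_def V_def ..
        also have "\<dots> = ennreal (\<Prod>k<d. exp (- (- s / 2) * (V \<omega> k)\<^sup>2))"
          by (rule prod_ennreal) simp
        also have "(\<Prod>k<d. exp (- (- s / 2) * (V \<omega> k)\<^sup>2)) = exp (\<Sum>k<d. - (- s / 2) * (V \<omega> k)\<^sup>2)"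
          by (simp add: exp_sum)
        also have "(\<Sum>k<d. - (- s / 2) * (V \<omega> k)\<^sup>2) = - (- s / 2) * (\<Sum>k<d. (V \<omega> k)\<^sup>2)"
          by (simp only: sum_distrib_left)
        finally show ?thesis .
      qed
      have one: "1 \<le> l / 2 * exp (- (s / 2) * (\<Sum>k<d. (U \<omega> k)\<^sup>2)) + 1 / (2 * l) * exp (- (- s / 2) * (\<Sum>k<d. (V \<omega> k)\<^sup>2))"
        by (rule amgm_pt[OF ch(2) l0 lt])
      define e1 where "e1 = exp (- (s / 2) * (\<Sum>k<d. (U \<omega> k)\<^sup>2))"
      define e2 where "e2 = exp (- (- s / 2) * (\<Sum>k<d. (V \<omega> k)\<^sup>2))"
      have l2: "l / 2 \<ge> 0" "1 / (2 * l) \<ge> 0" using l0 by auto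
      have "ennreal (l / 2 * e1 + 1 / (2 * l) * e2) = ennreal (l / 2 * e1) + ennreal (1 / (2 * l) * e2)"
        by (rule ennreal_plus) (use l0 in \<open>auto simp: e1_def e2_def\<close>)
      also have "\<dots> = ennreal (l / 2) * P1 \<omega> + ennreal (1 / (2 * l)) * P2 \<omega>"
        unfolding P1e P2e e1_def[symmetric] e2_def[symmetric] ennreal_mult'[OF l2(1)] ennreal_mult'[OF l2(2)] ..
      finally have "ennreal (l / 2) * P1 \<omega> + ennreal (1 / (2 * l)) * P2 \<omega> = ennreal (l / 2 * e1 + 1 / (2 * l) * e2)" ..
      moreover have "ennreal 1 \<le> ennreal (l / 2 * e1 + 1 / (2 * l) * e2)"
        using one unfolding e1_def e2_def by (rule ennreal_leI)
      ultimately show ?thesis using True by simp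
    qed
    have em: "emeasure \<Omega> E \<le> ennreal (sqrt (Ar * Br))"
    proof (cases "E \<in> sets \<Omega>")
      case False then show ?thesis by (simp add: emeasure_notin_sets)
    next
      case True
      have "emeasure \<Omega> E = (\<integral>\<^sup>+\<omega>. indicator E \<omega> \<partial>\<Omega>)" using True by simp
      also have "\<dots> \<le> (\<integral>\<^sup>+\<omega>. ennreal (l / 2) * P1 \<omega> + ennreal (1 / (2 * l)) * P2 \<omega> \<partial>\<Omega>)"
        by (intro nn_integral_mono ptw)
      also have "\<dots> = ennreal (l / 2) * integral\<^sup>N \<Omega> P1 + ennreal (1 / (2 * l)) * integral\<^sup>N \<Omega> P2"
        using mP1 mP2 by (simp add: nn_integral_add nn_integral_cmult)
      also have "\<dots> = ennreal (l / 2 * Ar + 1 / (2 * l) * Br)"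
      proof -
        have l2: "l / 2 \<ge> 0" "1 / (2 * l) \<ge> 0" using l0 by auto
        have "ennreal (l / 2 * Ar + 1 / (2 * l) * Br) = ennreal (l / 2 * Ar) + ennreal (1 / (2 * l) * Br)"
          by (rule ennreal_plus) (use l0 Ar0 in auto)
        also have "\<dots> = ennreal (l / 2) * integral\<^sup>N \<Omega> P1 + ennreal (1 / (2 * l)) * integral\<^sup>N \<Omega> P2"
          unfolding IA IB ennreal_mult'[OF l2(1)] ennreal_mult'[OF l2(2)] ..
        finally show ?thesis ..
      qed
      also have "l / 2 * Ar + 1 / (2 * l) * Br = sqrt (Ar * Br)"
        unfolding l_def by (rule lam_opt[OF Ar0])
      finally show ?thesis .
    qed
    then have "measure \<Omega> E \<le> sqrt (Ar * Br)" using Ar0 by (simp add: Pr.emeasure_eq_measure)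
    also have "sqrt (Ar * Br) \<le> rho_bound \<sigma> \<tau> c cb powr (real d / 4)"
      unfolding Ar_def Br_def by (rule final_num[OF Xp Yp rho0 XYr])
    finally show ?thesis .
  qed
  show ?thesis using PE rr unfolding \<Omega>_def E_def by simp
qed

end
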